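(* Let $b_1<\dots<b_n$ be the black and $w_1<\dots<w_n$ the white nodes of $\mathbf N=\{1,\dots,2n\}$, and for black $i$, white $j$ let $\epsilon_{i,j}=(-1)^{[i>j]}\,\mathrm{sign}(i,j)\in\{\pm1\}$, where $(-1)^{[i>j]}$ is $-1$ if $i>j$ and $1$ otherwise (these are the signs of the entries of $M=[(-1)^{[i>j]}\mathrm{sign}(i,j)Y_{i,j}]^{i=b_1..b_n}_{j=w_1..w_n}$). Then: (a) if there is no couple of consecutive white nodes $(m,m+1)$ with $b_a<m<m+1<b_{a+1}$, then $\epsilon_{b_{a+1},w}=-\epsilon_{b_a,w}$ for every white $w$; symmetrically, if there is no couple of consecutive black nodes strictly between $w_c$ and $w_{c+1}$, then $\epsilon_{b,w_{c+1}}=-\epsilon_{b,w_c}$ for every black $b$ (so $M$ is a block matrix whose blocks have checkerboard sign pattern). (b) There exist $r_1,\dots,r_n,c_1,\dots,c_n\in\{\pm1\}$ with $r_a c_d\,\epsilon_{b_a,w_d}=(-1)^{a+d}$ for all $a,d$; if $t$ denotes the number of $-1$'s among the $r_a$ and $c_d$ (whose parity is independent of the choice), then $$(-1)^t=\mathrm{sign}_c(\mathbf N)\,(-1)^{\sum_{i=1}^{2k}\lfloor n_i/2\rfloor}\ \text{ if node 1 is black},\qquad (-1)^t=(-1)^n\,\mathrm{sign}_c(\mathbf N)\,(-1)^{\sum_{i=1}^{2k}\lfloor n_i/2\rfloor}\ \text{ if node 1 is white}.$$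
   Context: Nodes $1,\dots,2n$ arranged counterclockwise, each colored black or white, $n$ of each. A couple of consecutive nodes of the same color is $(m,m+1)$, $m\in\{1,\dots,2n\}$, indices mod $2n$ (so $(2n,1)$ allowed), with $m,m+1$ same color; list all couples as $(n_1,n_1+1),\dots,(n_{2k},n_{2k}+1)$ with $n_1<\dots<n_{2k}$; the black couples have first elements $s_1<\dots<s_k$ and the white couples $u_1<\dots<u_k$. For black $i$, white $j$: $a_{i,j}$ = number of $m$ with $\min(i,j)\le m<m+1\le\max(i,j)$, $m,m+1$ same color; $\mathrm{sign}(i,j)=(-1)^{(|i-j|+a_{i,j}-1)/2}$. If node 1 is black let $\varphi(u_i)=2i-1,\varphi(s_i)=2i$; if white let $\varphi(s_i)=2i-1,\varphi(u_i)=2i$; $\mathrm{sign}_c(\mathbf N)$ = sign of the permutation $(\varphi(n_1),\dots,\varphi(n_{2k}))$, and $1$ if $k=0$. *)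

theory Defs
  imports "HOL-Combinatorics.Permutations"
begin

text \<open>Nodes are 1..2n; a colouring is col :: nat => bool, True = black, False = white.\<close>

definition nxt :: "nat \<Rightarrow> nat \<Rightarrow> nat" where
  "nxt n m = (if m = 2 * n then 1 else m + 1)"

text \<open>first elements of couples of consecutive nodes of the same colour (cyclically)\<close>
definition couples :: "(nat \<Rightarrow> bool) \<Rightarrow> nat \<Rightarrow> nat set" where
  "couples col n = {m \<in> {1..2 * n}. col m = col (nxt n m)}"

definition blacks :: "(nat \<Rightarrow> bool) \<Rightarrow> nat \<Rightarrow> nat set" where
  "blacks col n = {i \<in> {1..2 * n}. col i}"

definition whites :: "(nat \<Rightarrow> bool) \<Rightarrow> nat \<Rightarrow> nat set" where
  "whites col n = {i \<in> {1..2 * n}. \<not> col i}"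

definition bnode :: "(nat \<Rightarrow> bool) \<Rightarrow> nat \<Rightarrow> nat \<Rightarrow> nat" where
  "bnode col n a = sorted_list_of_set (blacks col n) ! (a - 1)"

definition wnode :: "(nat \<Rightarrow> bool) \<Rightarrow> nat \<Rightarrow> nat \<Rightarrow> nat" where
  "wnode col n d = sorted_list_of_set (whites col n) ! (d - 1)"

definition acount :: "(nat \<Rightarrow> bool) \<Rightarrow> nat \<Rightarrow> nat \<Rightarrow> nat" where
  "acount col i j = card {m. min i j \<le> m \<and> m + 1 \<le> max i j \<and> col m = col (m + 1)}"

definition sgnij :: "(nat \<Rightarrow> bool) \<Rightarrow> nat \<Rightarrow> nat \<Rightarrow> int" where
  "sgnij col i j = (-1) ^ (((if i \<le> j then j - i else i - j) + acount col i j - 1) div 2)"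

definition eps :: "(nat \<Rightarrow> bool) \<Rightarrow> nat \<Rightarrow> nat \<Rightarrow> int" where
  "eps col i j = (if i > j then -1 else 1) * sgnij col i j"

text \<open>phi: for a couple first element m of colour c, with p = number of couples of the
  same colour with smaller first element (so m is the (p+1)-th of its colour):
  node 1 black: phi(u_i) = 2i-1, phi(s_i) = 2i; node 1 white: phi(s_i)=2i-1, phi(u_i)=2i.\<close>
definition phi :: "(nat \<Rightarrow> bool) \<Rightarrow> nat \<Rightarrow> nat \<Rightarrow> nat" where
  "phi col n m =
     (let i = card {x \<in> couples col n. col x = col m \<and> x < m} + 1 in
      if col 1 then (if col m then 2 * i else 2 * i - 1)
      else (if col m then 2 * i - 1 else 2 * i))"

definition cperm :: "(nat \<Rightarrow> bool) \<Rightarrow> nat \<Rightarrow> nat \<Rightarrow> nat" where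
  "cperm col n = (\<lambda>i. if i \<in> {1..card (couples col n)}
      then phi col n (sorted_list_of_set (couples col n) ! (i - 1)) else i)"

definition signc :: "(nat \<Rightarrow> bool) \<Rightarrow> nat \<Rightarrow> int" where
  "signc col n = (if couples col n = {} then 1 else sign (cperm col n))"

end

theory Submission
  imports Defs
begin

definition Qf :: "int \<Rightarrow> int \<Rightarrow> int \<Rightarrow> int \<Rightarrow> int \<Rightarrow> int \<Rightarrow> int \<Rightarrow> int" where
  "Qf L h nb kb kw f e = (- nb - kb + kw + h + 2*L*kb + L*kw - L*f + L*e + L*h + 2*nb*kb + 2*nb*h + kb*kb + kb*kw
            + 2*kb*f + kb*e - kb*h + kw*kw + kw*f + kw*h + f*e - f*h + e*h)"

lemma step_arith:
  fixes L h nb kb kw D Pp Ss oo :: int and f e x :: bool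
  assumes "oo = 0 \<or> oo = 1" and L: "L = 2*h+oo"
    and C: "2*nb - kb + kw - L = of_bool f + of_bool e - 1"
    and I: "(D + 2*Pp + 2*Ss - Qf L h nb kb kw (of_bool f) (of_bool e)) mod 4 = 0"
  shows "((D + (if x then -(L-1-kb-kw + of_bool(e\<noteq>x)) else (L-1-kb-kw+of_bool(e\<noteq>x))))
     + 2*(Pp + of_bool(e\<and>x)*kw) + 2*(Ss + of_bool(e=x)*h)
     - Qf (L+1) (h+oo) (nb + of_bool x) (kb + of_bool(e\<and>x)) (kw + of_bool(\<not>e\<and>\<not>x)) (of_bool f) (of_bool x)) mod 4 = 0"
    (is "?new mod 4 = 0")
proof -
  let ?old = "D + 2*Pp + 2*Ss - Qf L h nb kb kw (of_bool f) (of_bool e)"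
  have kw: "kw = L + of_bool f + of_bool e - 1 - 2*nb + kb" using C by simp
  have c1: "\<exists>q. ?new = ?old + 4 * q" if "\<not> f" "\<not> e" "\<not> x" "oo = 0"
    by (rule exI[of _ "(-2)*h + (-2)*kb + (2)*nb"]) (use that kw L in \<open>simp add: Qf_def algebra_simps\<close>)
  have c2: "\<exists>q. ?new = ?old + 4 * q" if "\<not> f" "\<not> e" "\<not> x" "oo = 1"
    by (rule exI[of _ "(-2) + (-3)*h + (-2)*kb + (2)*nb"]) (use that kw L in \<open>simp add: Qf_def algebra_simps\<close>)
  have c3: "\<exists>q. ?new = ?old + 4 * q" if "\<not> f" "\<not> e" "x" "oo = 0"
    by (rule exI[of _ "(-2)*h + (-1)*kb"]) (use that kw L in \<open>simp add: Qf_def algebra_simps\<close>)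
  have c4: "\<exists>q. ?new = ?old + 4 * q" if "\<not> f" "\<not> e" "x" "oo = 1"
    by (rule exI[of _ "(-2) + (-3)*h + (-1)*kb"]) (use that kw L in \<open>simp add: Qf_def algebra_simps\<close>)
  have c5: "\<exists>q. ?new = ?old + 4 * q" if "\<not> f" "e" "\<not> x" "oo = 0"
    by (rule exI[of _ "(-1)*kb + (1)*nb"]) (use that kw L in \<open>simp add: Qf_def algebra_simps\<close>)
  have c6: "\<exists>q. ?new = ?old + 4 * q" if "\<not> f" "e" "\<not> x" "oo = 1"
    by (rule exI[of _ "(-1) + (-1)*h + (-1)*kb + (1)*nb"]) (use that kw L in \<open>simp add: Qf_def algebra_simps\<close>)
  have c7: "\<exists>q. ?new = ?old + 4 * q" if "\<not> f" "e" "x" "oo = 0"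
    by (rule exI[of _ "(-1) + (-1)*h + (-1)*kb + (-1)*nb"]) (use that kw L in \<open>simp add: Qf_def algebra_simps\<close>)
  have c8: "\<exists>q. ?new = ?old + 4 * q" if "\<not> f" "e" "x" "oo = 1"
    by (rule exI[of _ "(-3) + (-2)*h + (-1)*kb + (-1)*nb"]) (use that kw L in \<open>simp add: Qf_def algebra_simps\<close>)
  have c9: "\<exists>q. ?new = ?old + 4 * q" if "f" "\<not> e" "\<not> x" "oo = 0"
    by (rule exI[of _ "(-1) + (-2)*h + (-2)*kb + (2)*nb"]) (use that kw L in \<open>simp add: Qf_def algebra_simps\<close>)
  have c10: "\<exists>q. ?new = ?old + 4 * q" if "f" "\<not> e" "\<not> x" "oo = 1"
    by (rule exI[of _ "(-3) + (-3)*h + (-2)*kb + (2)*nb"]) (use that kw L in \<open>simp add: Qf_def algebra_simps\<close>)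
  have c11: "\<exists>q. ?new = ?old + 4 * q" if "f" "\<not> e" "x" "oo = 0"
    by (rule exI[of _ "(-2)*h + (-1)*kb"]) (use that kw L in \<open>simp add: Qf_def algebra_simps\<close>)
  have c12: "\<exists>q. ?new = ?old + 4 * q" if "f" "\<not> e" "x" "oo = 1"
    by (rule exI[of _ "(-2) + (-3)*h + (-1)*kb"]) (use that kw L in \<open>simp add: Qf_def algebra_simps\<close>)
  have c13: "\<exists>q. ?new = ?old + 4 * q" if "f" "e" "\<not> x" "oo = 0"
    by (rule exI[of _ "(-1)*kb + (1)*nb"]) (use that kw L in \<open>simp add: Qf_def algebra_simps\<close>)
  have c14: "\<exists>q. ?new = ?old + 4 * q" if "f" "e" "\<not> x" "oo = 1"
    by (rule exI[of _ "(-1) + (-1)*h + (-1)*kb + (1)*nb"]) (use that kw L in \<open>simp add: Qf_def algebra_simps\<close>)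
  have c15: "\<exists>q. ?new = ?old + 4 * q" if "f" "e" "x" "oo = 0"
    by (rule exI[of _ "(-1) + (-1)*h + (-1)*kb + (-1)*nb"]) (use that kw L in \<open>simp add: Qf_def algebra_simps\<close>)
  have c16: "\<exists>q. ?new = ?old + 4 * q" if "f" "e" "x" "oo = 1"
    by (rule exI[of _ "(-3) + (-2)*h + (-1)*kb + (-1)*nb"]) (use that kw L in \<open>simp add: Qf_def algebra_simps\<close>)
  have "\<exists>q. ?new = ?old + 4 * q"
    using c1 c2 c3 c4 c5 c6 c7 c8 c9 c10 c11 c12 c13 c14 c15 c16 assms(1) by (cases f; cases e; cases x) auto

  then obtain q where q: "?new = ?old + 4*q" by blast
  hence "?new mod 4 = ?old mod 4" by (metis mod_mult_self2)
  thus ?thesis using I by simp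
qed

definition Cf :: "(nat \<Rightarrow> bool) \<Rightarrow> nat \<Rightarrow> int" where
  "Cf col p = (\<Sum>m\<in>{1..<p}. of_bool (col m \<noteq> col (Suc m)))"
definition KB :: "(nat \<Rightarrow> bool) \<Rightarrow> nat \<Rightarrow> int" where
  "KB col L = (\<Sum>m\<in>{1..<L}. of_bool (col m \<and> col (Suc m)))"
definition KW :: "(nat \<Rightarrow> bool) \<Rightarrow> nat \<Rightarrow> int" where
  "KW col L = (\<Sum>m\<in>{1..<L}. of_bool (\<not> col m \<and> \<not> col (Suc m)))"
definition PP :: "(nat \<Rightarrow> bool) \<Rightarrow> nat \<Rightarrow> int" where
  "PP col L = (\<Sum>m\<in>{1..<L}. of_bool (col m \<and> col (Suc m)) * KW col m)"
definition SS :: "(nat \<Rightarrow> bool) \<Rightarrow> nat \<Rightarrow> int" where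
  "SS col L = (\<Sum>m\<in>{1..<L}. of_bool (col m = col (Suc m)) * int (m div 2))"
definition DD :: "(nat \<Rightarrow> bool) \<Rightarrow> nat \<Rightarrow> int" where
  "DD col L = (\<Sum>p\<in>{1..L}. if col p then - Cf col p else Cf col p)"
definition NB :: "(nat \<Rightarrow> bool) \<Rightarrow> nat \<Rightarrow> int" where
  "NB col L = (\<Sum>p\<in>{1..L}. of_bool (col p))"

lemma sums_Suc:
  assumes "1 \<le> L"
  shows "Cf col (Suc L) = Cf col L + of_bool (col L \<noteq> col (Suc L))"
    "KB col (Suc L) = KB col L + of_bool (col L \<and> col (Suc L))"
    "KW col (Suc L) = KW col L + of_bool (\<not> col L \<and> \<not> col (Suc L))"
    "PP col (Suc L) = PP col L + of_bool (col L \<and> col (Suc L)) * KW col L"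
    "SS col (Suc L) = SS col L + of_bool (col L = col (Suc L)) * int (L div 2)"
    "DD col (Suc L) = DD col L + (if col (Suc L) then - Cf col (Suc L) else Cf col (Suc L))"
    "NB col (Suc L) = NB col L + of_bool (col (Suc L))"
  using assms by (simp_all add: Cf_def KB_def KW_def PP_def SS_def DD_def NB_def)

lemma Cf_rel: "1 \<le> L \<Longrightarrow> Cf col L = int L - 1 - KB col L - KW col L"
proof (induction L rule: nat_induct_at_least)
  case base
  then show ?case by (simp add: Cf_def KB_def KW_def)
next
  case (Suc L)
  then show ?case by (auto simp: sums_Suc)
qed

lemma prefix_inv:
  "1 \<le> L \<Longrightarrow> 2 * NB col L - KB col L + KW col L - int L = of_bool (col 1) + of_bool (col L) - 1
    \<and> (DD col L + 2 * PP col L + 2 * SS col L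
        - Qf (int L) (int (L div 2)) (NB col L) (KB col L) (KW col L) (of_bool (col 1)) (of_bool (col L))) mod 4 = 0"
proof (induction L rule: nat_induct_at_least)
  case base
  then show ?case by (cases "col 1") (simp_all add: Cf_def KB_def KW_def PP_def SS_def DD_def NB_def Qf_def)
next
  case (Suc L)
  have C1: "Cf col L = int L - 1 - KB col L - KW col L" using Cf_rel Suc.hyps by blast
  have oo: "int (L mod 2) = 0 \<or> int (L mod 2) = 1" by auto
  have Lh: "int L = 2 * int (L div 2) + int (L mod 2)"
  proof -
    have "L = 2*(L div 2) + L mod 2" by simp
    then show ?thesis by (metis of_nat_add of_nat_mult of_nat_numeral)
  qed
  have hS: "int (Suc L div 2) = int (L div 2) + int (L mod 2)"
  proof -
    have "Suc L div 2 = L div 2 + L mod 2" by presburger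
    then show ?thesis by simp
  qed
  have c1: "2 * NB col (Suc L) - KB col (Suc L) + KW col (Suc L) - int (Suc L) = of_bool (col 1) + of_bool (col (Suc L)) - 1"
    using Suc.IH Suc.hyps by (cases "col L"; cases "col (Suc L)") (simp_all add: sums_Suc)
  have "(DD col (Suc L) + 2 * PP col (Suc L) + 2 * SS col (Suc L)
        - Qf (int (Suc L)) (int (Suc L div 2)) (NB col (Suc L)) (KB col (Suc L)) (KW col (Suc L)) (of_bool (col 1)) (of_bool (col (Suc L)))) mod 4 = 0"
    using step_arith[OF oo Lh conjunct1[OF Suc.IH] conjunct2[OF Suc.IH], of "col (Suc L)"]
    unfolding sums_Suc[OF Suc.hyps] hS C1 by (simp add: add_ac)
  with c1 show ?case by blast
qed

definition invs :: "(nat \<Rightarrow> nat) \<Rightarrow> nat \<Rightarrow> (nat \<times> nat) set" where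
  "invs p m = {(i,j). 1 \<le> i \<and> i < j \<and> j \<le> m \<and> p j < p i}"

lemma finite_invs: "finite (invs p m)"
  by (rule finite_subset[of _ "{1..m} \<times> {1..m}"]) (auto simp: invs_def)

lemma mono_chain:
  fixes p :: "nat \<Rightarrow> nat"
  assumes "\<forall>i. 1 \<le> i \<longrightarrow> i < m \<longrightarrow> p i < p (Suc i)"
  shows "1 \<le> i \<Longrightarrow> i < j \<Longrightarrow> j \<le> m \<Longrightarrow> p i < p j"
proof (induction j)
  case 0 then show ?case by simp
next
  case (Suc j)
  show ?case
  proof (cases "i = j")
    case True then show ?thesis using assms Suc.prems by auto
  next
    case False
    then have "p i < p j" using Suc by auto
    also have "p j < p (Suc j)" using assms Suc.prems False by auto
    finally show ?thesis .
  qed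
qed

lemma transpose_less:
  assumes "a < b" "(a, b) \<noteq> (i, Suc i)"
  shows "transpose i (Suc i) a < transpose i (Suc i) b"
  using assms by (auto simp: transpose_def)

lemma sign_invs:
  assumes "p permutes {1..m}"
  shows "sign p = (-1) ^ card (invs p m)"
  using assms
proof (induction "card (invs p m)" arbitrary: p rule: less_induct)
  case less
  have perm: "permutation p" using less.prems permutes_imp_permutation by blast
  show ?case
  proof (cases "\<forall>i. 1 \<le> i \<longrightarrow> i < m \<longrightarrow> p i < p (Suc i)")
    case True
    note mc = mono_chain[OF True]
    have e: "invs p m = {}"
      using mc by (fastforce simp: invs_def)
    have ge: "i \<le> p i" if "1 \<le> i" "i \<le> m" for i
      using that
    proof (induction i rule: nat_induct_at_least)
      case base
      have "p 1 \<in> {1..m}" using permutes_in_image[OF less.prems, of 1] base by auto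
      then show ?case by simp
    next
      case (Suc i)
      then show ?case using True by (metis Suc_le_eq Suc_le_lessD le_less_trans less_or_eq_imp_le)
    qed
    have le: "p (m - k) \<le> m - k" if "k < m" for k
      using that
    proof (induction k)
      case 0
      have "p m \<in> {1..m}" using permutes_in_image[OF less.prems, of m] 0 by auto
      then show ?case by simp
    next
      case (Suc k)
      have "p (m - Suc k) < p (Suc (m - Suc k))" using True Suc.prems by auto
      moreover have "Suc (m - Suc k) = m - k" using Suc.prems by auto
      ultimately show ?case using Suc by auto
    qed
    have "p i = i" for i
    proof (cases "i \<in> {1..m}")
      case True
      then have "p i \<le> i" using le[of "m - i"] by auto
      then show ?thesis using ge True by force
    next
      case False
      then show ?thesis using less.prems by (simp add: permutes_def)
    qed
    then have "p = id" by auto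
    then show ?thesis using e by simp
  next
    case False
    then obtain i where i: "1 \<le> i" "i < m" "\<not> p i < p (Suc i)" by blast
    define t where "t = transpose i (Suc i)"
    have pi: "p i \<noteq> p (Suc i)" using less.prems permutes_inj by (metis injD n_not_Suc_n)
    with i have desc: "p (Suc i) < p i" by auto
    define q where "q = p \<circ> t"
    have tperm: "t permutes {1..m}" unfolding t_def using i by (intro permutes_swap_id) auto
    have qperm: "q permutes {1..m}" unfolding q_def using tperm less.prems by (rule permutes_compose)
    have tt: "t (t x) = x" for x unfolding t_def by (simp add: transpose_def)
    have tin: "x \<in> {1..m} \<Longrightarrow> t x \<in> {1..m}" for x unfolding t_def using i by (auto simp: transpose_def)
    let ?f = "\<lambda>(a,b). (t a, t b)"
    have img: "invs q m = ?f ` (invs p m - {(i, Suc i)})"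
    proof
      show "invs q m \<subseteq> ?f ` (invs p m - {(i, Suc i)})"
      proof
        fix z assume z: "z \<in> invs q m"
        obtain c d where cd: "z = (c,d)" by force
        with z have c: "1 \<le> c" "c < d" "d \<le> m" "p (t d) < p (t c)" by (auto simp: invs_def q_def)
        have ne: "(c,d) \<noteq> (i, Suc i)"
        proof
          assume "(c,d) = (i, Suc i)"
          then show False using c desc unfolding t_def by (auto simp: transpose_def)
        qed
        have lt: "t c < t d" using transpose_less[OF c(2) ne] t_def by simp
        have ne2: "(t c, t d) \<noteq> (i, Suc i)"
        proof
          assume "(t c, t d) = (i, Suc i)"
          then have "c = Suc i" "d = i" using tt by (metis old.prod.inject t_def transpose_eq_iff)+
          then show False using c by simp
        qed
        have "t c \<in> {1..m}" "t d \<in> {1..m}" using tin c by auto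
        then have "(t c, t d) \<in> invs p m - {(i, Suc i)}" using lt c ne2 by (auto simp: invs_def)
        moreover have "z = ?f (t c, t d)" using cd tt by simp
        ultimately show "z \<in> ?f ` (invs p m - {(i, Suc i)})" by blast
      qed
    next
      show "?f ` (invs p m - {(i, Suc i)}) \<subseteq> invs q m"
      proof
        fix z assume "z \<in> ?f ` (invs p m - {(i, Suc i)})"
        then obtain a b where ab: "(a,b) \<in> invs p m" "(a,b) \<noteq> (i, Suc i)" "z = (t a, t b)" by auto
        then have a: "1 \<le> a" "a < b" "b \<le> m" "p b < p a" by (auto simp: invs_def)
        have "t a < t b" using transpose_less[OF a(2) ab(2)] t_def by simp
        moreover have "t a \<in> {1..m}" "t b \<in> {1..m}" using tin a by auto
        ultimately show "z \<in> invs q m" using ab a tt by (auto simp: invs_def q_def)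
      qed
    qed
    have injf: "inj_on ?f (invs p m - {(i, Suc i)})"
    proof -
      have tinj: "t a = t b \<Longrightarrow> a = b" for a b by (metis tt)
      show ?thesis by (auto intro!: inj_onI dest: tinj)
    qed
    have mem: "(i, Suc i) \<in> invs p m" using i desc by (auto simp: invs_def)
    have cq: "card (invs q m) = card (invs p m) - 1"
      using img card_image[OF injf] finite_invs mem by simp
    have cpos: "card (invs p m) > 0" using mem finite_invs card_gt_0_iff by blast
    have IH: "sign q = (-1) ^ card (invs q m)"
      using less.hyps[OF _ qperm] cq cpos by simp
    have "p = q \<circ> t" unfolding q_def t_def by (simp add: comp_assoc)
    then have "sign p = sign q * sign t"
      using sign_compose permutes_imp_permutation qperm tperm by (metis finite_atLeastAtMost)
    also have "sign t = -1" unfolding t_def by (simp add: sign_swap_id)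
    finally show ?thesis using IH cq cpos
      by (metis (no_types, lifting) Suc_diff_1 mult.commute mult_minus1 power_Suc)
  qed
qed

definition rk :: "nat set \<Rightarrow> nat \<Rightarrow> nat" where
  "rk A x = card {z\<in>A. z < x}"

lemma rk_less: "finite A \<Longrightarrow> x \<in> A \<Longrightarrow> y \<in> A \<Longrightarrow> x < y \<Longrightarrow> rk A x < rk A y"
  unfolding rk_def by (rule psubset_card_mono) auto

lemma rk_bound: "finite A \<Longrightarrow> x \<in> A \<Longrightarrow> rk A x < card A"
  unfolding rk_def by (rule psubset_card_mono) auto

lemma rk_inj: "finite A \<Longrightarrow> inj_on (rk A) A"
  by (rule inj_onI) (metis less_irrefl linorder_neqE_nat rk_less)

lemma rk_bij: "finite A \<Longrightarrow> bij_betw (rk A) A {0..<card A}"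
proof -
  assume f: "finite A"
  have "rk A ` A \<subseteq> {0..<card A}" using rk_bound[OF f] by auto
  moreover have "card (rk A ` A) = card A" using card_image[OF rk_inj[OF f]] .
  ultimately have "rk A ` A = {0..<card A}" by (intro card_subset_eq) auto
  then show ?thesis using rk_inj[OF f] by (simp add: bij_betw_def)
qed

lemma sorted_nth_less:
  fixes A :: "nat set"
  assumes "i < j" "j < card A"
  shows "sorted_list_of_set A ! i < sorted_list_of_set A ! j"
  using assms strict_sorted_list_of_set[of A] by (simp add: sorted_wrt_nth_less)

lemma sorted_nth_less_iff:
  fixes A :: "nat set"
  assumes "i < card A" "j < card A"
  shows "sorted_list_of_set A ! i < sorted_list_of_set A ! j \<longleftrightarrow> i < j"
  using assms sorted_nth_less by (metis less_asym linorder_neqE_nat)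

lemma sorted_nth_in:
  fixes A :: "nat set"
  assumes "finite A" "i < card A"
  shows "sorted_list_of_set A ! i \<in> A"
  using assms by (metis length_sorted_list_of_set nth_mem set_sorted_list_of_set)

lemma sorted_nth_bij:
  fixes A :: "nat set"
  assumes "finite A"
  shows "bij_betw (\<lambda>i. sorted_list_of_set A ! (i - 1)) {1..card A} A"
proof -
  have "bij_betw (\<lambda>i. sorted_list_of_set A ! i) {0..<card A} A"
    using assms by (metis atLeast0LessThan bij_betw_nth distinct_sorted_list_of_set
        length_sorted_list_of_set set_sorted_list_of_set)
  moreover have "bij_betw (\<lambda>i. i - 1) {1..card A} {0..<card A}"
    by (rule bij_betwI[where g = "\<lambda>i. i + 1"]) auto
  ultimately show ?thesis using bij_betw_trans by (fastforce simp: comp_def)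
qed

lemma sorted_nth_next:
  fixes A :: "nat set"
  assumes "finite A" "Suc i < card A" "x \<in> A" "sorted_list_of_set A ! i < x"
  shows "sorted_list_of_set A ! Suc i \<le> x"
proof -
  obtain j where j: "j < card A" "x = sorted_list_of_set A ! j"
    using assms by (metis in_set_conv_nth length_sorted_list_of_set set_sorted_list_of_set)
  have "i < j" using sorted_nth_less_iff[of i A j] j assms by simp
  then show ?thesis using j sorted_nth_less[of "Suc i" j A]
    by (metis Suc_leI le_eq_less_or_eq order_refl)
qed

lemma card_xor:
  assumes "finite X"
  shows "card {z\<in>X. P z \<noteq> Q z} + 2 * card {z\<in>X. P z \<and> Q z} = card {z\<in>X. P z} + card {z\<in>X. Q z}"
proof -
  have a: "card {z\<in>X. P z} = card {z\<in>X. P z \<and> Q z} + card {z\<in>X. P z \<and> \<not> Q z}"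
    using assms by (subst card_Un_disjoint[symmetric]) (auto intro: arg_cong[where f=card])
  have b: "card {z\<in>X. Q z} = card {z\<in>X. P z \<and> Q z} + card {z\<in>X. \<not> P z \<and> Q z}"
    using assms by (subst card_Un_disjoint[symmetric]) (auto intro: arg_cong[where f=card])
  have c: "card {z\<in>X. P z \<noteq> Q z} = card {z\<in>X. P z \<and> \<not> Q z} + card {z\<in>X. \<not> P z \<and> Q z}"
    using assms by (subst card_Un_disjoint[symmetric]) (auto intro: arg_cong[where f=card])
  show ?thesis using a b c by simp
qed

lemma card_tri_le: "2 * card {(a,c). a < k \<and> c < k \<and> c \<le> a} = k * (k + 1)"
proof (induction k)
  case 0 then show ?case by simp
next
  case (Suc k)
  have "{(a,c). a < Suc k \<and> c < Suc k \<and> c \<le> a} = {(a,c). a < k \<and> c < k \<and> c \<le> a} \<union> (\<lambda>c. (k,c)) ` {0..k}"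
    by auto
  moreover have "card ((\<lambda>c. (k,c)) ` {0..k}) = Suc k" by (subst card_image) (auto intro: inj_onI)
  moreover have "finite {(a,c). a < k \<and> c < k \<and> c \<le> a}"
    by (rule finite_subset[of _ "{0..<k} \<times> {0..<k}"]) auto
  moreover have "{(a,c). a < k \<and> c < k \<and> c \<le> a} \<inter> (\<lambda>c. (k,c)) ` {0..k} = {}" by auto
  ultimately show ?case using Suc by (simp add: card_Un_disjoint)
qed

lemma card_tri_less: "2 * card {(a,c). a < k \<and> c < k \<and> c < a} = k * (k - 1)"
proof (induction k)
  case 0 then show ?case by simp
next
  case (Suc k)
  have "{(a,c). a < Suc k \<and> c < Suc k \<and> c < a} = {(a,c). a < k \<and> c < k \<and> c < a} \<union> (\<lambda>c. (k,c)) ` {0..<k}"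
    by auto
  moreover have "card ((\<lambda>c. (k,c)) ` {0..<k}) = k" by (subst card_image) (auto intro: inj_onI)
  moreover have "finite {(a,c). a < k \<and> c < k \<and> c < a}"
    by (rule finite_subset[of _ "{0..<k} \<times> {0..<k}"]) auto
  moreover have "{(a,c). a < k \<and> c < k \<and> c < a} \<inter> (\<lambda>c. (k,c)) ` {0..<k} = {}" by auto
  ultimately have eq: "2 * card {(a,c). a < Suc k \<and> c < Suc k \<and> c < a} = k * (k - 1) + 2 * k"
    using Suc by (simp add: card_Un_disjoint algebra_simps)
  show ?case unfolding eq by (cases k) (simp_all add: algebra_simps)
qed

definition sg :: "int \<Rightarrow> int" where "sg z = (if even z then 1 else -1)"

lemma sg_add: "sg (a + b) = sg a * sg b" by (simp add: sg_def)
lemma sg_eq: "even (a - b) \<Longrightarrow> sg a = sg b"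
  unfolding sg_def by (metis add_diff_cancel_left' diff_add_cancel even_add)
lemma sg_neg: "sg (z + 1) = - sg z" by (simp add: sg_def)
lemma sg_pow: "(-1::int) ^ m = sg (int m)" by (simp add: sg_def)
lemma sg_pm: "sg z = 1 \<or> sg z = -1" by (simp add: sg_def)
lemma sg_sq: "sg z * sg z = 1" by (simp add: sg_def)

lemma Cf_Suc: "1 \<le> p \<Longrightarrow> Cf col (Suc p) = Cf col p + of_bool (col p \<noteq> col (Suc p))"
  using sums_Suc(1) by blast

lemma Cf_parity: "1 \<le> p \<Longrightarrow> even (Cf col p) \<longleftrightarrow> (col p = col 1)"
proof (induction p rule: nat_induct_at_least)
  case base then show ?case by (simp add: Cf_def)
next
  case (Suc p) then show ?case by (auto simp: Cf_Suc)
qed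

lemma acount_sym: "acount col i j = acount col j i"
  unfolding acount_def by (simp add: min.commute max.commute)

lemma acount_Cf:
  assumes "1 \<le> i" "i \<le> j"
  shows "int (acount col i j) = int (j - i) - (Cf col j - Cf col i)"
proof -
  have s: "{m. min i j \<le> m \<and> m + 1 \<le> max i j \<and> col m = col (m + 1)} = {i..<j} \<inter> {m. col m = col (Suc m)}"
    using assms by auto
  have a: "int (acount col i j) = (\<Sum>m\<in>{i..<j}. of_bool (col m = col (Suc m)))"
    unfolding acount_def s by (simp add: sum_of_bool_eq)
  have c0: "Cf col j = Cf col i + (\<Sum>m\<in>{i..<j}. of_bool (col m \<noteq> col (Suc m)))"
    unfolding Cf_def by (rule sum.atLeastLessThan_concat[symmetric]) (use assms in auto)
  then have c: "Cf col j - Cf col i = (\<Sum>m\<in>{i..<j}. of_bool (col m \<noteq> col (Suc m)))" by simp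
  have "(\<Sum>m\<in>{i..<j}. of_bool (col m = col (Suc m))) + (\<Sum>m\<in>{i..<j}. of_bool (col m \<noteq> col (Suc m)))
      = (\<Sum>m\<in>{i..<j}. (1::int))"
    by (subst sum.distrib[symmetric]) (rule sum.cong, auto)
  then show ?thesis using a c assms by simp
qed

definition hh :: "(nat \<Rightarrow> bool) \<Rightarrow> nat \<Rightarrow> nat \<Rightarrow> int" where
  "hh col i j = (Cf col j - Cf col i + 1) div 2"

lemma hh2:
  assumes "1 \<le> i" "1 \<le> j" "col i" "\<not> col j"
  shows "2 * hh col i j = Cf col j - Cf col i + 1"
proof -
  have "even (Cf col i) \<noteq> even (Cf col j)" using Cf_parity[OF assms(1)] Cf_parity[OF assms(2)] assms by auto
  then have "even (Cf col j - Cf col i + 1)" by auto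
  then show ?thesis unfolding hh_def by presburger
qed

lemma eps_closed:
  assumes "1 \<le> i" "1 \<le> j" "col i" "\<not> col j"
  shows "eps col i j = sg (int i + int j + hh col i j)"
proof -
  have h2: "2 * hh col i j = Cf col j - Cf col i + 1" by (rule hh2[OF assms])
  have ne: "i \<noteq> j" using assms by auto
  show ?thesis
  proof (cases "i < j")
    case True
    have a: "int (acount col i j) = int (j - i) - (Cf col j - Cf col i)" using acount_Cf assms True by simp
    define e where "e = ((j - i) + acount col i j - 1) div 2"
    have ee: "2 * int e = 2 * int (j - i) - (Cf col j - Cf col i) - 1"
    proof -
      have pos: "1 \<le> (j - i) + acount col i j" using True by simp
      have "int ((j - i) + acount col i j - 1) = 2 * int (j - i) - (Cf col j - Cf col i) - 1"
        using a pos by simp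
      moreover have "even (2 * int (j - i) - (Cf col j - Cf col i) - 1)" using h2 by presburger
      ultimately show ?thesis unfolding e_def by (metis even_of_nat even_two_times_div_two of_nat_mult of_nat_numeral zdiv_int)
    qed
    have "eps col i j = sg (int e)" using True unfolding eps_def sgnij_def e_def by (simp add: sg_pow)
    also have "\<dots> = sg (int i + int j + hh col i j)"
      by (rule sg_eq) (use ee h2 True in presburger)
    finally show ?thesis .
  next
    case False
    then have lt: "j < i" using ne by simp
    have a: "int (acount col i j) = int (i - j) - (Cf col i - Cf col j)"
      using acount_Cf[of j i col] assms lt acount_sym[of col i j] by simp
    define e where "e = ((i - j) + acount col i j - 1) div 2"
    have ee: "2 * int e = 2 * int (i - j) - (Cf col i - Cf col j) - 1"
    proof -
      have pos: "1 \<le> (i - j) + acount col i j" using lt by simp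
      have "int ((i - j) + acount col i j - 1) = 2 * int (i - j) - (Cf col i - Cf col j) - 1"
        using a pos by simp
      moreover have "even (2 * int (i - j) - (Cf col i - Cf col j) - 1)" using h2 by presburger
      ultimately show ?thesis unfolding e_def by (metis even_of_nat even_two_times_div_two of_nat_mult of_nat_numeral zdiv_int)
    qed
    have "eps col i j = - sg (int e)" using lt unfolding eps_def sgnij_def e_def by (simp add: sg_pow)
    also have "\<dots> = sg (int e + 1)" by (simp add: sg_neg)
    also have "\<dots> = sg (int i + int j + hh col i j)"
      by (rule sg_eq) (use ee h2 lt in presburger)
    finally show ?thesis .
  qed
qed

lemma blacks_sub: "blacks col n \<subseteq> {1..2*n}" by (auto simp: blacks_def)
lemma whites_sub: "whites col n \<subseteq> {1..2*n}" by (auto simp: whites_def)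
lemma finite_blacks: "finite (blacks col n)" by (simp add: blacks_def)
lemma finite_whites: "finite (whites col n)" by (simp add: whites_def)
lemma BW_union: "blacks col n \<union> whites col n = {1..2*n}" by (auto simp: blacks_def whites_def)
lemma BW_disj: "blacks col n \<inter> whites col n = {}" by (auto simp: blacks_def whites_def)

lemma card_whites: assumes "card (blacks col n) = n" shows "card (whites col n) = n"
proof -
  have "card (blacks col n) + card (whites col n) = 2 * n"
    using card_Un_disjoint[OF finite_blacks finite_whites BW_disj] BW_union by (metis card_atLeastAtMost diff_Suc_1)
  then show ?thesis using assms by simp
qed

lemma bnode_in: assumes "card (blacks col n) = n" "a \<in> {1..n}" shows "bnode col n a \<in> blacks col n"
  unfolding bnode_def using sorted_nth_in[OF finite_blacks, of "a - 1"] assms by auto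

lemma wnode_in: assumes "card (blacks col n) = n" "a \<in> {1..n}" shows "wnode col n a \<in> whites col n"
  unfolding wnode_def using sorted_nth_in[OF finite_whites, of "a - 1"] assms card_whites[OF assms(1)] by auto

lemma consec:
  fixes A :: "nat set"
  assumes "finite A" "Suc i < card A" "x \<in> A" "sorted_list_of_set A ! i < x"
  shows "\<not> x < sorted_list_of_set A ! Suc i"
  using sorted_nth_next[OF assms] by simp

lemma partA1:
  assumes cb: "card (blacks col n) = n" and a: "a \<in> {1..<n}"
    and nm: "\<not> (\<exists>m. bnode col n a < m \<and> m + 1 < bnode col n (a + 1) \<and> \<not> col m \<and> \<not> col (m + 1))"
    and w: "w \<in> whites col n"
  shows "eps col (bnode col n (a + 1)) w = - eps col (bnode col n a) w"
proof -
  define B where "B = blacks col n"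
  define b where "b = bnode col n a"
  define b' where "b' = bnode col n (a + 1)"
  have bL: "b = sorted_list_of_set B ! (a - 1)" unfolding b_def bnode_def B_def ..
  have bL': "b' = sorted_list_of_set B ! Suc (a - 1)" unfolding b'_def bnode_def B_def using a by simp
  have bB: "b \<in> B" unfolding b_def B_def using bnode_in[OF cb] a by auto
  have bB': "b' \<in> B" unfolding b'_def B_def using bnode_in[OF cb] a by auto
  have cB: "card B = n" using cb B_def by simp
  have lt: "b < b'" unfolding bL bL' using sorted_nth_less[of "a - 1" "Suc (a - 1)" B] a cB by simp
  have b1: "1 \<le> b" "col b" using bB by (auto simp: B_def blacks_def)
  have b1': "1 \<le> b'" "b' \<le> 2 * n" "col b'" using bB' by (auto simp: B_def blacks_def)
  have betw: "\<not> col x" if "b < x" "x < b'" for x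
  proof
    assume cx: "col x"
    have "x \<in> B" using that cx b1 b1' by (auto simp: B_def blacks_def)
    then show False using consec[of B "a - 1" x] finite_blacks cB a that bL bL' B_def by auto
  qed
  have cases: "b' = b + 1 \<or> b' = b + 2"
  proof (rule ccontr)
    assume "\<not> ?thesis"
    then have "b + 3 \<le> b'" using lt by auto
    then have "bnode col n a < b+1 \<and> b+1+1 < bnode col n (a + 1) \<and> \<not> col (b+1) \<and> \<not> col (b+1+1)"
      using betw[of "b+1"] betw[of "b+2"] unfolding b_def b'_def by simp
    then show False using nm by blast
  qed
  have w1: "1 \<le> w" "\<not> col w" using w by (auto simp: whites_def)
  have e1: "eps col b w = sg (int b + int w + hh col b w)" by (rule eps_closed) (use b1 w1 in auto)
  have e2: "eps col b' w = sg (int b' + int w + hh col b' w)" by (rule eps_closed) (use b1' w1 in auto)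
  have h1: "2 * hh col b w = Cf col w - Cf col b + 1" by (rule hh2) (use b1 w1 in auto)
  have h2: "2 * hh col b' w = Cf col w - Cf col b' + 1" by (rule hh2) (use b1' w1 in auto)
  have "sg (int b' + int w + hh col b' w) = sg (int b + int w + hh col b w + 1)"
  proof (rule sg_eq)
    from cases show "even (int b' + int w + hh col b' w - (int b + int w + hh col b w + 1))"
    proof
      assume eq: "b' = b + 1"
      have "Cf col b' = Cf col b" using Cf_Suc[of b col] b1 b1' eq by simp
      then have "2 * hh col b' w = 2 * hh col b w" using h1 h2 by linarith
      then show ?thesis using eq by simp
    next
      assume eq: "b' = b + 2"
      have m: "\<not> col (b + 1)" using betw eq by simp
      have "Cf col (Suc b) = Cf col b + 1" using Cf_Suc[of b col] b1 m by simp
      moreover have "Cf col (Suc (Suc b)) = Cf col (Suc b) + 1" using Cf_Suc[of "Suc b" col] b1' m eq by simp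
      ultimately have "Cf col b' = Cf col b + 2" using eq by simp
      then have "hh col b' w = hh col b w - 1" using h1 h2 by linarith
      then show ?thesis using eq by simp
    qed
  qed
  then show ?thesis using e1 e2 sg_neg b_def b'_def by simp
qed

lemma partA2:
  assumes cb: "card (blacks col n) = n" and a: "a \<in> {1..<n}"
    and nm: "\<not> (\<exists>m. wnode col n a < m \<and> m + 1 < wnode col n (a + 1) \<and> col m \<and> col (m + 1))"
    and bw: "bb \<in> blacks col n"
  shows "eps col bb (wnode col n (a + 1)) = - eps col bb (wnode col n a)"
proof -
  define B where "B = whites col n"
  define b where "b = wnode col n a"
  define b' where "b' = wnode col n (a + 1)"
  have bL: "b = sorted_list_of_set B ! (a - 1)" unfolding b_def wnode_def B_def ..
  have bL': "b' = sorted_list_of_set B ! Suc (a - 1)" unfolding b'_def wnode_def B_def using a by simp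
  have bB: "b \<in> B" unfolding b_def B_def using wnode_in[OF cb] a by auto
  have bB': "b' \<in> B" unfolding b'_def B_def using wnode_in[OF cb] a by auto
  have cB: "card B = n" using card_whites[OF cb] B_def by simp
  have lt: "b < b'" unfolding bL bL' using sorted_nth_less[of "a - 1" "Suc (a - 1)" B] a cB by simp
  have b1: "1 \<le> b" "\<not> col b" using bB by (auto simp: B_def whites_def)
  have b1': "1 \<le> b'" "b' \<le> 2 * n" "\<not> col b'" using bB' by (auto simp: B_def whites_def)
  have betw: "col x" if "b < x" "x < b'" for x
  proof (rule ccontr)
    assume cx: "\<not> col x"
    have "x \<in> B" using that cx b1 b1' by (auto simp: B_def whites_def)
    then show False using consec[of B "a - 1" x] finite_whites cB a that bL bL' B_def by auto
  qed
  have cases: "b' = b + 1 \<or> b' = b + 2"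
  proof (rule ccontr)
    assume "\<not> ?thesis"
    then have "b + 3 \<le> b'" using lt by auto
    then have "wnode col n a < b+1 \<and> b+1+1 < wnode col n (a + 1) \<and> col (b+1) \<and> col (b+1+1)"
      using betw[of "b+1"] betw[of "b+2"] unfolding b_def b'_def by simp
    then show False using nm by blast
  qed
  have w1: "1 \<le> bb" "col bb" using bw by (auto simp: blacks_def)
  have e1: "eps col bb b = sg (int bb + int b + hh col bb b)" by (rule eps_closed) (use b1 w1 in auto)
  have e2: "eps col bb b' = sg (int bb + int b' + hh col bb b')" by (rule eps_closed) (use b1' w1 in auto)
  have h1: "2 * hh col bb b = Cf col b - Cf col bb + 1" by (rule hh2) (use b1 w1 in auto)
  have h2: "2 * hh col bb b' = Cf col b' - Cf col bb + 1" by (rule hh2) (use b1' w1 in auto)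
  have "sg (int bb + int b' + hh col bb b') = sg (int bb + int b + hh col bb b + 1)"
  proof (rule sg_eq)
    from cases show "even (int bb + int b' + hh col bb b' - (int bb + int b + hh col bb b + 1))"
    proof
      assume eq: "b' = b + 1"
      have "Cf col b' = Cf col b" using Cf_Suc[of b col] b1 b1' eq by simp
      then have "2 * hh col bb b' = 2 * hh col bb b" using h1 h2 by linarith
      then show ?thesis using eq by simp
    next
      assume eq: "b' = b + 2"
      have m: "col (b + 1)" using betw eq by simp
      have "Cf col (Suc b) = Cf col b + 1" using Cf_Suc[of b col] b1 m by simp
      moreover have "Cf col (Suc (Suc b)) = Cf col (Suc b) + 1" using Cf_Suc[of "Suc b" col] b1' m eq by simp
      ultimately have "Cf col b' = Cf col b + 2" using eq by simp
      then have "hh col bb b' = hh col bb b + 1" using h1 h2 by linarith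
      then show ?thesis using eq by simp
    qed
  qed
  then show ?thesis using e1 e2 sg_neg b_def b'_def by simp
qed

lemma sg_eq2: "a = b + 2 * k \<Longrightarrow> sg a = sg b"
  by (rule sg_eq) simp

lemma sg_num: "sg 1 = -1" "sg 2 = 1" "sg 0 = 1" by (simp_all add: sg_def)

lemma prod_pm:
  assumes "finite A" "\<forall>a\<in>A. r a \<in> {1, -1::int}"
  shows "(\<Prod>a\<in>A. r a) = (-1) ^ card {a\<in>A. r a = -1}"
  using assms
proof (induction A rule: finite_induct)
  case empty then show ?case by simp
next
  case (insert x F)
  have fF: "finite {a\<in>F. r a = -1}" using insert by simp
  show ?case
  proof (cases "r x = -1")
    case True
    have "{a\<in>insert x F. r a = -1} = insert x {a\<in>F. r a = -1}" using True by auto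
    then show ?thesis using insert True fF by simp
  next
    case False
    then have "r x = 1" using insert by auto
    moreover have "{a\<in>insert x F. r a = -1} = {a\<in>F. r a = -1}" using False by auto
    ultimately show ?thesis using insert by simp
  qed
qed

lemma prod_sg: "finite A \<Longrightarrow> (\<Prod>a\<in>A. sg (f a)) = sg (\<Sum>a\<in>A. f a)"
  by (induction A rule: finite_induct) (simp_all add: sg_add, simp add: sg_def)

lemma eps_bw:
  assumes cb: "card (blacks col n) = n" "a \<in> {1..n}" "d \<in> {1..n}"
  shows "eps col (bnode col n a) (wnode col n d)
     = sg (int (bnode col n a) + int (wnode col n d) + hh col (bnode col n a) (wnode col n d))"
    "2 * hh col (bnode col n a) (wnode col n d) = Cf col (wnode col n d) - Cf col (bnode col n a) + 1"
proof -
  have b: "bnode col n a \<in> blacks col n" "wnode col n d \<in> whites col n"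
    using bnode_in wnode_in assms by auto
  then show "eps col (bnode col n a) (wnode col n d)
     = sg (int (bnode col n a) + int (wnode col n d) + hh col (bnode col n a) (wnode col n d))"
    by (intro eps_closed) (auto simp: blacks_def whites_def)
  show "2 * hh col (bnode col n a) (wnode col n d) = Cf col (wnode col n d) - Cf col (bnode col n a) + 1"
    using b by (intro hh2) (auto simp: blacks_def whites_def)
qed

lemma partB_exists:
  assumes cb: "card (blacks col n) = n" and n: "0 < n"
  shows "\<exists>r c :: nat \<Rightarrow> int. (\<forall>a\<in>{1..n}. r a \<in> {1, -1}) \<and> (\<forall>d\<in>{1..n}. c d \<in> {1, -1}) \<and>
        (\<forall>a\<in>{1..n}. \<forall>d\<in>{1..n}. r a * c d * eps col (bnode col n a) (wnode col n d) = (-1) ^ (a + d))"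
proof -
  define b where "b a = int (bnode col n a)" for a
  define w where "w d = int (wnode col n d)" for d
  define H where "H a d = hh col (bnode col n a) (wnode col n d)" for a d
  define E where "E a d = sg (b a + w d + H a d + int a + int d)" for a d
  have epsE: "eps col (bnode col n a) (wnode col n d) = sg (b a + w d + H a d)" if "a \<in> {1..n}" "d \<in> {1..n}" for a d
    using eps_bw[OF cb that] b_def w_def H_def by simp
  have H2: "2 * H a d = Cf col (wnode col n d) - Cf col (bnode col n a) + 1" if "a \<in> {1..n}" "d \<in> {1..n}" for a d
    using eps_bw[OF cb that] H_def by simp
  have one: "(1::nat) \<in> {1..n}" using n by simp
  define r where "r a = E a 1" for a
  define c where "c d = E 1 d * E 1 1" for d
  show ?thesis
  proof (intro exI conjI ballI)
    fix a assume "a \<in> {1..n}" show "r a \<in> {1,-1}" unfolding r_def E_def using sg_pm by auto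
  next
    fix d assume "d \<in> {1..n}" show "c d \<in> {1,-1}" unfolding c_def E_def using sg_pm
      by (auto simp: sg_def)
  next
    fix a d assume a: "a \<in> {1..n}" and d: "d \<in> {1..n}"
    have hs: "H a 1 + H 1 d = H 1 1 + H a d" using H2[OF a one] H2[OF one d] H2[OF one one] H2[OF a d] by linarith
    have "r a * c d * eps col (bnode col n a) (wnode col n d)
        = sg ((b a + w 1 + H a 1 + int a + int 1) + ((b 1 + w d + H 1 d + int 1 + int d) + (b 1 + w 1 + H 1 1 + int 1 + int 1))
              + (b a + w d + H a d))"
      unfolding r_def c_def E_def epsE[OF a d] by (simp only: sg_add mult.assoc)
    also have "\<dots> = sg (int (a + d))"
    proof (rule sg_eq2[where k = "b a + w 1 + b 1 + w d + 2 + H 1 1 + H a d"])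
      show "b a + w 1 + H a 1 + int a + int 1 + (b 1 + w d + H 1 d + int 1 + int d + (b 1 + w 1 + H 1 1 + int 1 + int 1))
         + (b a + w d + H a d) = int (a + d) + 2 * (b a + w 1 + b 1 + w d + 2 + H 1 1 + H a d)"
        using hs by simp
    qed
    finally show "r a * c d * eps col (bnode col n a) (wnode col n d) = (-1) ^ (a + d)"
      by (simp add: sg_pow)
  qed
qed

lemma gauss_int: "2 * (\<Sum>x\<in>{1..m}. int x) = int m * (int m + 1)"
  by (induction m) (simp_all add: algebra_simps)

lemma sum_bnode:
  assumes cb: "card (blacks col n) = n"
  shows "(\<Sum>a\<in>{1..n}. g (bnode col n a)) = (\<Sum>x\<in>blacks col n. g x)"
  unfolding bnode_def using sum.reindex_bij_betw[OF sorted_nth_bij[OF finite_blacks, of col n], of g] cb by simp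

lemma sum_wnode:
  assumes cb: "card (blacks col n) = n"
  shows "(\<Sum>a\<in>{1..n}. g (wnode col n a)) = (\<Sum>x\<in>whites col n. g x)"
  unfolding wnode_def using sum.reindex_bij_betw[OF sorted_nth_bij[OF finite_whites, of col n], of g] card_whites[OF cb] by simp

lemma sum_BW: "(\<Sum>x\<in>blacks col n. g x) + (\<Sum>x\<in>whites col n. g x) = (\<Sum>x\<in>{1..2*n}. g x)"
  using sum.union_disjoint[OF finite_blacks finite_whites BW_disj, of g] BW_union by simp

lemma DD_BW: "DD col (2*n) = (\<Sum>x\<in>whites col n. Cf col x) - (\<Sum>x\<in>blacks col n. Cf col x)"
proof -
  have "DD col (2*n) = (\<Sum>x\<in>blacks col n. if col x then - Cf col x else Cf col x) + (\<Sum>x\<in>whites col n. if col x then - Cf col x else Cf col x)"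
    unfolding DD_def using sum_BW[of "\<lambda>x. if col x then - Cf col x else Cf col x" col n] by simp
  also have "(\<Sum>x\<in>blacks col n. if col x then - Cf col x else Cf col x) = - (\<Sum>x\<in>blacks col n. Cf col x)"
    by (simp add: blacks_def sum_negf)
  also have "(\<Sum>x\<in>whites col n. if col x then - Cf col x else Cf col x) = (\<Sum>x\<in>whites col n. Cf col x)"
    by (simp add: whites_def)
  finally show ?thesis by simp
qed

lemma lhs_value:
  assumes cb: "card (blacks col n) = n" and n: "0 < n"
    and r: "\<forall>a\<in>{1..n}. r a \<in> {1, -1::int}" and c: "\<forall>d\<in>{1..n}. c d \<in> {1, -1::int}"
    and rc: "\<forall>a\<in>{1..n}. \<forall>d\<in>{1..n}. r a * c d * eps col (bnode col n a) (wnode col n d) = (-1) ^ (a + d)"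
  shows "\<exists>Hs. 2 * Hs = DD col (2*n) + int n \<and>
     (-1::int) ^ (card {a\<in>{1..n}. r a = -1} + card {d\<in>{1..n}. c d = -1}) = sg (int n * (2 * int n + 1) + Hs)"
proof -
  define Hs where "Hs = (\<Sum>a\<in>{1..n}. hh col (bnode col n a) (wnode col n a))"
  have "(-1::int) ^ (card {a\<in>{1..n}. r a = -1} + card {d\<in>{1..n}. c d = -1}) = (\<Prod>a\<in>{1..n}. r a) * (\<Prod>a\<in>{1..n}. c a)"
    using prod_pm[OF _ r] prod_pm[OF _ c] by (simp add: power_add)
  also have "\<dots> = (\<Prod>a\<in>{1..n}. r a * c a)" by (simp add: prod.distrib)
  also have "\<dots> = (\<Prod>a\<in>{1..n}. sg (int (bnode col n a) + int (wnode col n a) + hh col (bnode col n a) (wnode col n a)))"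
  proof (rule prod.cong)
    fix a assume a: "a \<in> {1..n}"
    have e: "eps col (bnode col n a) (wnode col n a) = sg (int (bnode col n a) + int (wnode col n a) + hh col (bnode col n a) (wnode col n a))"
      using eps_bw[OF cb a a] by simp
    have "r a * c a * eps col (bnode col n a) (wnode col n a) = 1" using rc a
      by (metis mult_2 power_even_eq power_minus1_even power_one)
    then have "r a * c a * (eps col (bnode col n a) (wnode col n a) * eps col (bnode col n a) (wnode col n a)) = eps col (bnode col n a) (wnode col n a)"
      by (metis mult.assoc mult_1)
    then show "r a * c a = sg (int (bnode col n a) + int (wnode col n a) + hh col (bnode col n a) (wnode col n a))"
      using e sg_sq by simp
  qed simp
  also have "\<dots> = sg (\<Sum>a\<in>{1..n}. int (bnode col n a) + int (wnode col n a) + hh col (bnode col n a) (wnode col n a))"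
    by (rule prod_sg) simp
  also have "(\<Sum>a\<in>{1..n}. int (bnode col n a) + int (wnode col n a) + hh col (bnode col n a) (wnode col n a))
     = (\<Sum>x\<in>{1..2*n}. int x) + Hs"
    unfolding Hs_def sum.distrib sum_bnode[OF cb, of int] sum_wnode[OF cb, of int] sum_BW ..
  also have "(\<Sum>x\<in>{1..2*n}. int x) = int n * (2 * int n + 1)"
    using gauss_int[of "2*n"] by simp
  finally have eq: "(-1::int) ^ (card {a\<in>{1..n}. r a = -1} + card {d\<in>{1..n}. c d = -1}) = sg (int n * (2 * int n + 1) + Hs)" .
  have "2 * Hs = (\<Sum>a\<in>{1..n}. Cf col (wnode col n a) - Cf col (bnode col n a) + 1)"
    unfolding Hs_def sum_distrib_left using eps_bw(2)[OF cb] by (intro sum.cong) auto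
  also have "\<dots> = DD col (2*n) + int n"
    unfolding sum.distrib sum_subtractf sum_bnode[OF cb] sum_wnode[OF cb] DD_BW by simp
  finally show ?thesis using eq by blast
qed

definition Bk :: "(nat \<Rightarrow> bool) \<Rightarrow> nat \<Rightarrow> nat set" where "Bk col n = {x\<in>couples col n. col x}"
definition Wt :: "(nat \<Rightarrow> bool) \<Rightarrow> nat \<Rightarrow> nat set" where "Wt col n = {x\<in>couples col n. \<not> col x}"

lemma couples_sub: "couples col n \<subseteq> {1..2*n}" by (auto simp: couples_def)
lemma finite_couples: "finite (couples col n)" by (simp add: couples_def)
lemma finite_Bk: "finite (Bk col n)" by (simp add: Bk_def finite_couples)
lemma finite_Wt: "finite (Wt col n)" by (simp add: Wt_def finite_couples)
lemma BkWt_union: "Bk col n \<union> Wt col n = couples col n" by (auto simp: Bk_def Wt_def)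
lemma BkWt_disj: "Bk col n \<inter> Wt col n = {}" by (auto simp: Bk_def Wt_def)

lemma Bk_eq: "0 < n \<Longrightarrow> Bk col n = {m\<in>{1..<2*n}. col m \<and> col (Suc m)} \<union> (if col (2*n) \<and> col 1 then {2*n} else {})"
  by (auto simp: Bk_def couples_def nxt_def)
lemma Wt_eq: "0 < n \<Longrightarrow> Wt col n = {m\<in>{1..<2*n}. \<not> col m \<and> \<not> col (Suc m)} \<union> (if \<not> col (2*n) \<and> \<not> col 1 then {2*n} else {})"
  by (auto simp: Wt_def couples_def nxt_def)

lemma card_Bk: "0 < n \<Longrightarrow> int (card (Bk col n)) = KB col (2*n) + of_bool (col (2*n) \<and> col 1)"
proof -
  assume n: "0 < n"
  have "KB col (2*n) = int (card {m\<in>{1..<2*n}. col m \<and> col (Suc m)})"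
    unfolding KB_def by (simp add: sum_of_bool_eq Int_def conj_commute)
  moreover have "card (Bk col n) = card {m\<in>{1..<2*n}. col m \<and> col (Suc m)} + of_bool (col (2*n) \<and> col 1)"
    unfolding Bk_eq[OF n] by (subst card_Un_disjoint) auto
  ultimately show ?thesis by simp
qed

lemma card_Wt: "0 < n \<Longrightarrow> int (card (Wt col n)) = KW col (2*n) + of_bool (\<not> col (2*n) \<and> \<not> col 1)"
proof -
  assume n: "0 < n"
  have "KW col (2*n) = int (card {m\<in>{1..<2*n}. \<not> col m \<and> \<not> col (Suc m)})"
    unfolding KW_def by (simp add: sum_of_bool_eq Int_def conj_commute)
  moreover have "card (Wt col n) = card {m\<in>{1..<2*n}. \<not> col m \<and> \<not> col (Suc m)} + of_bool (\<not> col (2*n) \<and> \<not> col 1)"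
    unfolding Wt_eq[OF n] by (subst card_Un_disjoint) auto
  ultimately show ?thesis by simp
qed

lemma NB_card: "NB col (2*n) = int (card (blacks col n))"
  unfolding NB_def blacks_def by (simp add: sum_of_bool_eq Int_def conj_commute)

lemma KW_KB:
  assumes n: "0 < n" and cb: "card (blacks col n) = n"
  shows "KW col (2*n) - KB col (2*n) = of_bool (col 1) + of_bool (col (2*n)) - 1"
  using conjunct1[OF prefix_inv[of "2*n" col]] n NB_card[of col n] cb by simp

lemma card_Bk_Wt:
  assumes n: "0 < n" and cb: "card (blacks col n) = n"
  shows "card (Bk col n) = card (Wt col n)"
proof -
  have "int (card (Bk col n)) = int (card (Wt col n))"
    using card_Bk[OF n, of col] card_Wt[OF n, of col] KW_KB[OF n cb] by (cases "col 1"; cases "col (2*n)") auto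
  then show ?thesis by simp
qed

lemma card_couples: "card (couples col n) = card (Bk col n) + card (Wt col n)"
  using card_Un_disjoint[OF finite_Bk finite_Wt BkWt_disj] BkWt_union by metis

lemma phi_B:
  assumes "x \<in> Bk col n"
  shows "phi col n x = (if col 1 then 2 * (rk (Bk col n) x + 1) else 2 * rk (Bk col n) x + 1)"
proof -
  have "{y\<in>couples col n. col y = col x \<and> y < x} = {z\<in>Bk col n. z < x}" using assms by (auto simp: Bk_def)
  then show ?thesis using assms unfolding phi_def rk_def by (auto simp: Bk_def Let_def)
qed

lemma phi_W:
  assumes "x \<in> Wt col n"
  shows "phi col n x = (if col 1 then 2 * rk (Wt col n) x + 1 else 2 * (rk (Wt col n) x + 1))"
proof -
  have "{y\<in>couples col n. col y = col x \<and> y < x} = {z\<in>Wt col n. z < x}" using assms by (auto simp: Wt_def)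
  then show ?thesis using assms unfolding phi_def rk_def by (auto simp: Wt_def Let_def)
qed

lemma phi_bij:
  assumes n: "0 < n" and cb: "card (blacks col n) = n"
  shows "bij_betw (phi col n) (couples col n) {1..card (couples col n)}"
proof -
  define k where "k = card (Bk col n)"
  have kw: "card (Wt col n) = k" using card_Bk_Wt[OF n cb] k_def by simp
  have K: "card (couples col n) = 2 * k" using card_couples kw k_def by simp
  have cpl: "x \<in> couples col n \<longleftrightarrow> x \<in> Bk col n \<or> x \<in> Wt col n" for x by (auto simp: Bk_def Wt_def)
  have inj: "inj_on (phi col n) (couples col n)"
  proof (rule inj_onI)
    fix x y assume x: "x \<in> couples col n" and y: "y \<in> couples col n" and e: "phi col n x = phi col n y"
    consider "x \<in> Bk col n" "y \<in> Bk col n" | "x \<in> Wt col n" "y \<in> Wt col n"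
      | "x \<in> Bk col n" "y \<in> Wt col n" | "x \<in> Wt col n" "y \<in> Bk col n" using x y cpl by blast
    then show "x = y"
    proof cases
      case 1 then have "rk (Bk col n) x = rk (Bk col n) y" using e phi_B[of x] phi_B[of y] by (auto split: if_splits)
      then show ?thesis using rk_inj[OF finite_Bk] 1 by (meson inj_onD)
    next
      case 2 then have "rk (Wt col n) x = rk (Wt col n) y" using e phi_W[of x] phi_W[of y] by (auto split: if_splits)
      then show ?thesis using rk_inj[OF finite_Wt] 2 by (meson inj_onD)
    next
      case 3 then show ?thesis using e phi_B[of x] phi_W[of y] by (auto split: if_splits) presburger+
    next
      case 4 then show ?thesis using e phi_W[of x] phi_B[of y] by (auto split: if_splits) presburger+
    qed
  qed
  have sub: "phi col n ` couples col n \<subseteq> {1..2*k}"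
  proof
    fix z assume "z \<in> phi col n ` couples col n"
    then obtain x where x: "x \<in> couples col n" "z = phi col n x" by blast
    then consider "x \<in> Bk col n" | "x \<in> Wt col n" using cpl by blast
    then show "z \<in> {1..2*k}"
    proof cases
      case 1 then show ?thesis using x phi_B[of x] rk_bound[OF finite_Bk 1] k_def by auto
    next
      case 2 then show ?thesis using x phi_W[of x] rk_bound[OF finite_Wt 2] kw by auto
    qed
  qed
  have "phi col n ` couples col n = {1..2*k}"
    by (rule card_subset_eq) (use sub card_image[OF inj] K in auto)
  then show ?thesis using inj K by (simp add: bij_betw_def)
qed

lemma cperm_permutes:
  assumes n: "0 < n" and cb: "card (blacks col n) = n"
  shows "cperm col n permutes {1..card (couples col n)}"
proof (rule bij_imp_permutes)
  let ?K = "card (couples col n)"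
  have "bij_betw (phi col n \<circ> (\<lambda>i. sorted_list_of_set (couples col n) ! (i - 1))) {1..?K} {1..?K}"
    by (rule bij_betw_trans[OF sorted_nth_bij[OF finite_couples] phi_bij[OF n cb]])
  then show "bij_betw (cperm col n) {1..?K} {1..?K}"
    by (rule bij_betw_cong[THEN iffD1, rotated]) (simp add: cperm_def)
next
  fix x assume "x \<notin> {1..card (couples col n)}"
  then show "cperm col n x = x" unfolding cperm_def by auto
qed

lemma signc_eq: "signc col n = sign (cperm col n)"
proof (cases "couples col n = {}")
  case True
  then have "cperm col n = id" by (auto simp: cperm_def)
  then show ?thesis using True by (simp add: signc_def)
qed (simp add: signc_def)

definition InvC :: "(nat \<Rightarrow> bool) \<Rightarrow> nat \<Rightarrow> (nat \<times> nat) set" where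
  "InvC col n = {(x,y). x \<in> couples col n \<and> y \<in> couples col n \<and> x < y \<and> phi col n y < phi col n x}"

lemma card_invs_InvC:
  assumes n: "0 < n" and cb: "card (blacks col n) = n"
  shows "card (invs (cperm col n) (card (couples col n))) = card (InvC col n)"
proof -
  let ?K = "card (couples col n)"
  let ?L = "sorted_list_of_set (couples col n)"
  define f where "f i = ?L ! (i - 1)" for i
  have fb: "bij_betw f {1..?K} (couples col n)" unfolding f_def by (rule sorted_nth_bij[OF finite_couples])
  have fmono: "f i < f j \<longleftrightarrow> i < j" if "i \<in> {1..?K}" "j \<in> {1..?K}" for i j
  proof -
    have a: "i - 1 < ?K" "j - 1 < ?K" using that by auto
    have "f i < f j \<longleftrightarrow> i - 1 < j - 1" unfolding f_def using sorted_nth_less_iff[OF a] .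
    then show ?thesis using that by auto
  qed
  have cp: "cperm col n i = phi col n (f i)" if "i \<in> {1..?K}" for i
    using that unfolding cperm_def f_def by simp
  define g where "g = (\<lambda>(i,j). (f i, f j))"
  have inj: "inj_on g (invs (cperm col n) ?K)"
  proof (rule inj_onI)
    fix z z' assume z: "z \<in> invs (cperm col n) ?K" and z': "z' \<in> invs (cperm col n) ?K" and e: "g z = g z'"
    obtain i j where ij: "z = (i,j)" by force
    obtain i' j' where ij': "z' = (i',j')" by force
    have r: "i \<in> {1..?K}" "j \<in> {1..?K}" "i' \<in> {1..?K}" "j' \<in> {1..?K}" using z z' ij ij' by (auto simp: invs_def)
    have "f i = f i'" "f j = f j'" using e ij ij' g_def by auto
    then show "z = z'" using ij ij' r fb by (metis bij_betw_def inj_onD)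
  qed
  have img: "g ` invs (cperm col n) ?K = InvC col n"
  proof
    show "g ` invs (cperm col n) ?K \<subseteq> InvC col n"
    proof
      fix z assume "z \<in> g ` invs (cperm col n) ?K"
      then obtain i j where ij: "(i,j) \<in> invs (cperm col n) ?K" "z = (f i, f j)" by (auto simp: g_def)
      then have r: "i \<in> {1..?K}" "j \<in> {1..?K}" "i < j" "cperm col n j < cperm col n i" by (auto simp: invs_def)
      have "f i \<in> couples col n" "f j \<in> couples col n" using r fb bij_betwE by blast+
      then show "z \<in> InvC col n" using ij r fmono cp unfolding InvC_def by auto
    qed
  next
    show "InvC col n \<subseteq> g ` invs (cperm col n) ?K"
    proof
      fix z assume "z \<in> InvC col n"
      then obtain x y where xy: "z = (x,y)" "x \<in> couples col n" "y \<in> couples col n" "x < y" "phi col n y < phi col n x"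
        unfolding InvC_def by auto
      obtain i where i: "i \<in> {1..?K}" "f i = x" using fb xy by (metis bij_betw_iff_bijections)
      obtain j where j: "j \<in> {1..?K}" "f j = y" using fb xy by (metis bij_betw_iff_bijections)
      have "i < j" using fmono i j xy by auto
      then have "(i,j) \<in> invs (cperm col n) ?K" using i j xy cp by (auto simp: invs_def)
      then show "z \<in> g ` invs (cperm col n) ?K" using xy i j g_def by force
    qed
  qed
  show ?thesis using card_image[OF inj] img by simp
qed

lemma phi_mono_B: "x \<in> Bk col n \<Longrightarrow> y \<in> Bk col n \<Longrightarrow> x < y \<Longrightarrow> phi col n x < phi col n y"
  using phi_B rk_less[OF finite_Bk] by (smt (verit) add_less_mono1 mult_less_cancel1 nat_0_less_mult_iff zero_less_numeral)
lemma phi_mono_W: "x \<in> Wt col n \<Longrightarrow> y \<in> Wt col n \<Longrightarrow> x < y \<Longrightarrow> phi col n x < phi col n y"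
  using phi_W rk_less[OF finite_Wt] by (smt (verit) add_less_mono1 mult_less_cancel1 nat_0_less_mult_iff zero_less_numeral)

lemma phi_ne: "b \<in> Bk col n \<Longrightarrow> w \<in> Wt col n \<Longrightarrow> phi col n b \<noteq> phi col n w"
  using phi_B[of b] phi_W[of w] by (auto split: if_splits) presburger+

lemma card_InvC_xor:
  "card (InvC col n) = card {(b,w). b \<in> Bk col n \<and> w \<in> Wt col n \<and> (w < b) \<noteq> (phi col n w < phi col n b)}"
proof -
  define A1 where "A1 = {(b,w). b \<in> Bk col n \<and> w \<in> Wt col n \<and> b < w \<and> phi col n w < phi col n b}"
  define A2 where "A2 = {(b,w). b \<in> Bk col n \<and> w \<in> Wt col n \<and> w < b \<and> phi col n b < phi col n w}"
  have fin: "finite (Bk col n \<times> Wt col n)" using finite_Bk finite_Wt by simp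
  have f1: "finite A1" by (rule finite_subset[OF _ fin]) (auto simp: A1_def)
  have f2: "finite A2" by (rule finite_subset[OF _ fin]) (auto simp: A2_def)
  have cpl: "x \<in> couples col n \<longleftrightarrow> x \<in> Bk col n \<or> x \<in> Wt col n" for x by (auto simp: Bk_def Wt_def)
  have inv_eq: "InvC col n = A1 \<union> (\<lambda>(b,w). (w,b)) ` A2"
  proof
    show "InvC col n \<subseteq> A1 \<union> (\<lambda>(b,w). (w,b)) ` A2"
    proof
      fix z assume z: "z \<in> InvC col n"
      then obtain x y where xy: "z = (x,y)" "x \<in> couples col n" "y \<in> couples col n" "x < y" "phi col n y < phi col n x"
        unfolding InvC_def by auto
      consider "x \<in> Bk col n" "y \<in> Wt col n" | "x \<in> Wt col n" "y \<in> Bk col n"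
        | "x \<in> Bk col n" "y \<in> Bk col n" | "x \<in> Wt col n" "y \<in> Wt col n" using xy cpl by blast
      then show "z \<in> A1 \<union> (\<lambda>(b,w). (w,b)) ` A2"
      proof cases
        case 1 then show ?thesis using xy A1_def by auto
      next
        case 2 then have "(y,x) \<in> A2" using xy A2_def by auto
        then show ?thesis using xy by force
      next
        case 3 then show ?thesis using xy phi_mono_B by fastforce
      next
        case 4 then show ?thesis using xy phi_mono_W by fastforce
      qed
    qed
  next
    show "A1 \<union> (\<lambda>(b,w). (w,b)) ` A2 \<subseteq> InvC col n"
      by (auto simp: A1_def A2_def InvC_def Bk_def Wt_def)
  qed
  have d: "A1 \<inter> (\<lambda>(b,w). (w,b)) ` A2 = {}" by (auto simp: A1_def A2_def Bk_def Wt_def)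
  have c2: "card ((\<lambda>(b,w). (w,b)) ` A2) = card A2" by (rule card_image) (auto intro: inj_onI)
  have "card (InvC col n) = card A1 + card A2"
    unfolding inv_eq using card_Un_disjoint[OF f1 _ d] f2 c2 by simp
  also have "\<dots> = card (A1 \<union> A2)"
    by (rule card_Un_disjoint[symmetric, OF f1 f2]) (auto simp: A1_def A2_def)
  also have "A1 \<union> A2 = {(b,w). b \<in> Bk col n \<and> w \<in> Wt col n \<and> (w < b) \<noteq> (phi col n w < phi col n b)}"
  proof -
    have ne: "b \<noteq> w" if "b \<in> Bk col n" "w \<in> Wt col n" for b w using that by (auto simp: Bk_def Wt_def)
    show ?thesis unfolding A1_def A2_def using ne phi_ne
      by (auto, (metis linorder_neqE_nat)+)
  qed
  finally show ?thesis .
qed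

lemma card_phi_less:
  assumes n: "0 < n" and cb: "card (blacks col n) = n"
  shows "2 * card {(b,w). b \<in> Bk col n \<and> w \<in> Wt col n \<and> phi col n w < phi col n b}
     = (if col 1 then card (Bk col n) * (card (Bk col n) + 1) else card (Bk col n) * (card (Bk col n) - 1))"
proof -
  define k where "k = card (Bk col n)"
  have kw: "card (Wt col n) = k" using card_Bk_Wt[OF n cb] k_def by simp
  define h where "h = (\<lambda>(b,w). (rk (Bk col n) b, rk (Wt col n) w))"
  have hb: "bij_betw h (Bk col n \<times> Wt col n) ({0..<k} \<times> {0..<k})"
    using bij_betw_map_prod[OF rk_bij[OF finite_Bk[of col n]] rk_bij[OF finite_Wt[of col n]]]
    unfolding h_def k_def[symmetric] kw by (simp add: map_prod_def)
  define Q where "Q = (\<lambda>(a::nat, c::nat). if col 1 then c \<le> a else c < a)"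
  have eqv: "phi col n w < phi col n b \<longleftrightarrow> Q (h (b,w))" if "b \<in> Bk col n" "w \<in> Wt col n" for b w
    using phi_B[OF that(1)] phi_W[OF that(2)] unfolding Q_def h_def by auto
  have s1: "{(b,w). b \<in> Bk col n \<and> w \<in> Wt col n \<and> phi col n w < phi col n b} = {z \<in> Bk col n \<times> Wt col n. Q (h z)}"
    using eqv by auto
  have bij2: "bij_betw h {z \<in> Bk col n \<times> Wt col n. Q (h z)} {y \<in> {0..<k} \<times> {0..<k}. Q y}"
  proof (rule bij_betw_subset[OF hb])
    show "{z \<in> Bk col n \<times> Wt col n. Q (h z)} \<subseteq> Bk col n \<times> Wt col n" by auto
    show "h ` {z \<in> Bk col n \<times> Wt col n. Q (h z)} = {y \<in> {0..<k} \<times> {0..<k}. Q y}"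
    proof
      show "h ` {z \<in> Bk col n \<times> Wt col n. Q (h z)} \<subseteq> {y \<in> {0..<k} \<times> {0..<k}. Q y}"
        using hb unfolding bij_betw_def by auto
      show "{y \<in> {0..<k} \<times> {0..<k}. Q y} \<subseteq> h ` {z \<in> Bk col n \<times> Wt col n. Q (h z)}"
      proof
        fix y assume y: "y \<in> {y \<in> {0..<k} \<times> {0..<k}. Q y}"
        then obtain z where "z \<in> Bk col n \<times> Wt col n" "y = h z" using hb unfolding bij_betw_def by (metis (no_types, lifting) imageE mem_Collect_eq)
        then show "y \<in> h ` {z \<in> Bk col n \<times> Wt col n. Q (h z)}" using y by blast
      qed
    qed
  qed
  have "card {(b,w). b \<in> Bk col n \<and> w \<in> Wt col n \<and> phi col n w < phi col n b} = card {y \<in> {0..<k} \<times> {0..<k}. Q y}"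
    unfolding s1 using bij_betw_same_card[OF bij2] .
  moreover have "{y \<in> {0..<k} \<times> {0..<k}. Q y} = (if col 1 then {(a,c). a < k \<and> c < k \<and> c \<le> a} else {(a,c). a < k \<and> c < k \<and> c < a})"
    unfolding Q_def by auto
  ultimately show ?thesis using card_tri_le[of k] card_tri_less[of k] k_def by (cases "col 1") auto
qed

lemma final_arith:
  fixes n kb kw DD PP SS X t kk Hs :: int and f e :: bool
  assumes C: "kw - kb = of_bool f + of_bool e - 1"
    and I: "(DD + 2*PP + 2*SS - Qf (2*n) n n kb kw (of_bool f) (of_bool e)) mod 4 = 0"
    and X: "X + 2*t = PP + of_bool (e \<and> f) * kw + kk"
    and K: "2*kk = (if f then (kb + of_bool (e\<and>f)) * (kb + of_bool (e\<and>f) + 1) else (kb + of_bool (e\<and>f)) * (kb + of_bool (e\<and>f) - 1))"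
    and H: "2*Hs = DD + n"
  shows "even (n*(2*n+1) + Hs - (if f then 0 else n) - X - (SS + of_bool (e = f) * n))"
proof -
  let ?old = "DD + 2*PP + 2*SS - Qf (2*n) n n kb kw (of_bool f) (of_bool e)"
  let ?T = "n*(2*n+1) + Hs - (if f then 0 else n) - X - (SS + of_bool (e = f) * n)"
  have kw: "kw = kb + of_bool f + of_bool e - 1" using C by simp
  have X2: "2*X = 2*PP + 2*(of_bool (e \<and> f) * kw) + 2*kk - 4*t" using X by linarith
  have c: "\<exists>q. 2 * ?T = ?old + 4*q + 2*(kb*(kb+1))"
  proof (cases f; cases e)
    assume "f" "e"
    show ?thesis
      by (rule exI[of _ "-PP - SS + 2*kb*n + n + 2*n*n + t"]) (use \<open>f\<close> \<open>e\<close> kw X2 K H in \<open>simp add: Qf_def algebra_simps\<close>)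
  next
    assume "f" "\<not> e"
    show ?thesis
      by (rule exI[of _ "-PP - SS + 2*kb*n + 2*n*n + t"]) (use \<open>f\<close> \<open>\<not> e\<close> kw X2 K H in \<open>simp add: Qf_def algebra_simps\<close>)
  next
    assume "\<not> f" "e"
    show ?thesis
      by (rule exI[of _ "-PP - SS + 2*kb*n + n + 2*n*n + t"]) (use \<open>\<not> f\<close> \<open>e\<close> kw X2 K H in \<open>simp add: Qf_def algebra_simps\<close>)
  next
    assume "\<not> f" "\<not> e"
    then have kwe: "kw = kb - 1" using kw by simp
    show ?thesis unfolding kwe
      by (rule exI[of _ "-PP - SS - kb + 2*kb*n - n + 2*n*n + t"]) (use \<open>\<not> f\<close> \<open>\<not> e\<close> X2 K H in \<open>simp add: Qf_def algebra_simps\<close>)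
  qed
  then obtain q where q: "2 * ?T = ?old + 4*q + 2*(kb*(kb+1))" by blast
  have "even (kb*(kb+1))" by simp
  then obtain u where u: "kb*(kb+1) = 2*u" by blast
  from I obtain v where v: "?old = 4*v" by (metis dvd_def mod_0_imp_dvd)
  have "2 * ?T = 4 * (v + q + u)" using q u v by simp
  then have "?T = 2 * (v + q + u)" by simp
  then show ?thesis by simp
qed

lemma couples_eq: "0 < n \<Longrightarrow> couples col n = {m\<in>{1..<2*n}. col m = col (Suc m)} \<union> (if col (2*n) = col 1 then {2*n} else {})"
  by (auto simp: couples_def nxt_def)

lemma card_wb:
  assumes n: "0 < n"
  shows "int (card {(b,w). b \<in> Bk col n \<and> w \<in> Wt col n \<and> w < b}) = PP col (2*n) + of_bool (col (2*n) \<and> col 1) * KW col (2*n)"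
proof -
  have s: "{(b,w). b \<in> Bk col n \<and> w \<in> Wt col n \<and> w < b} = Sigma (Bk col n) (\<lambda>b. {w\<in>Wt col n. w < b})" by auto
  have "card {(b,w). b \<in> Bk col n \<and> w \<in> Wt col n \<and> w < b} = (\<Sum>b\<in>Bk col n. card {w\<in>Wt col n. w < b})"
    unfolding s by (rule card_SigmaI) (auto simp: finite_Bk finite_Wt)
  then have e1: "int (card {(b,w). b \<in> Bk col n \<and> w \<in> Wt col n \<and> w < b}) = (\<Sum>b\<in>Bk col n. int (card {w\<in>Wt col n. w < b}))"
    by simp
  have kwb: "int (card {w\<in>Wt col n. w < b}) = KW col b" if "b \<le> 2*n" for b
  proof -
    have "{w\<in>Wt col n. w < b} = {1..<b} \<inter> {m. \<not> col m \<and> \<not> col (Suc m)}"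
      using that n by (auto simp: Wt_eq)
    then show ?thesis unfolding KW_def by (simp add: sum_of_bool_eq)
  qed
  have bk: "\<And>b. b \<in> Bk col n \<Longrightarrow> b \<le> 2*n" using couples_sub[of col n] by (auto simp: Bk_def)
  have e2: "(\<Sum>b\<in>Bk col n. int (card {w\<in>Wt col n. w < b})) = (\<Sum>b\<in>Bk col n. KW col b)"
    using kwb bk by (intro sum.cong) auto
  define B0 where "B0 = {m\<in>{1..<2*n}. col m \<and> col (Suc m)}"
  have fB0: "finite B0" by (simp add: B0_def)
  have "(\<Sum>b\<in>Bk col n. KW col b) = (\<Sum>b\<in>B0. KW col b) + of_bool (col (2*n) \<and> col 1) * KW col (2*n)"
    unfolding Bk_eq[OF n] B0_def[symmetric] using fB0 by (cases "col (2*n) \<and> col 1") (auto simp: B0_def)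
  moreover have "PP col (2*n) = (\<Sum>b\<in>B0. KW col b)"
  proof -
    have "PP col (2*n) = (\<Sum>m\<in>{1..<2*n}. if col m \<and> col (Suc m) then KW col m else 0)"
      unfolding PP_def by (intro sum.cong) auto
    also have "\<dots> = (\<Sum>m\<in>B0. KW col m)" unfolding B0_def by (rule sum.inter_filter[symmetric]) simp
    finally show ?thesis .
  qed
  ultimately show ?thesis using e1 e2 by simp
qed

lemma sum_div2:
  assumes n: "0 < n"
  shows "(\<Sum>m\<in>couples col n. int (m div 2)) = SS col (2*n) + of_bool (col (2*n) = col 1) * int n"
proof -
  define C0 where "C0 = {m\<in>{1..<2*n}. col m = col (Suc m)}"
  have fC0: "finite C0" by (simp add: C0_def)
  have "(\<Sum>m\<in>couples col n. int (m div 2)) = (\<Sum>m\<in>C0. int (m div 2)) + of_bool (col (2*n) = col 1) * int n"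
    unfolding couples_eq[OF n] C0_def[symmetric] using fC0 by (cases "col (2*n) = col 1") (auto simp: C0_def)
  moreover have "SS col (2*n) = (\<Sum>m\<in>C0. int (m div 2))"
  proof -
    have "SS col (2*n) = (\<Sum>m\<in>{1..<2*n}. if col m = col (Suc m) then int (m div 2) else 0)"
      unfolding SS_def by (intro sum.cong) auto
    also have "\<dots> = (\<Sum>m\<in>C0. int (m div 2))" unfolding C0_def by (rule sum.inter_filter[symmetric]) simp
    finally show ?thesis .
  qed
  ultimately show ?thesis by simp
qed

lemma int_kk: "int (k * (k - 1)) = int k * (int k - 1)" by (cases k) (auto simp: algebra_simps)

lemma partB_parity:
  assumes n: "0 < n" and cb: "card (blacks col n) = n"
    and r: "\<forall>a\<in>{1..n}. r a \<in> {1, -1::int}" and c: "\<forall>d\<in>{1..n}. c d \<in> {1, -1::int}"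
    and rc: "\<forall>a\<in>{1..n}. \<forall>d\<in>{1..n}. r a * c d * eps col (bnode col n a) (wnode col n d) = (-1) ^ (a + d)"
  shows "(-1::int) ^ (card {a\<in>{1..n}. r a = -1} + card {d\<in>{1..n}. c d = -1})
          = (if col 1 then 1 else (-1) ^ n) * signc col n * (-1) ^ (\<Sum>m\<in>couples col n. m div 2)"
proof -
  obtain Hs where H: "2 * Hs = DD col (2*n) + int n"
    and L: "(-1::int) ^ (card {a\<in>{1..n}. r a = -1} + card {d\<in>{1..n}. c d = -1}) = sg (int n * (2 * int n + 1) + Hs)"
    using lhs_value[OF cb n r c rc] by blast
  define f where "f = col 1"
  define e where "e = col (2*n)"
  define X where "X = int (card (InvC col n))"
  define Pset where "Pset = {z \<in> Bk col n \<times> Wt col n. snd z < fst z}"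
  define Qset where "Qset = {z \<in> Bk col n \<times> Wt col n. phi col n (snd z) < phi col n (fst z)}"
  define Tset where "Tset = {z \<in> Bk col n \<times> Wt col n. snd z < fst z \<and> phi col n (snd z) < phi col n (fst z)}"
  have fin: "finite (Bk col n \<times> Wt col n)" using finite_Bk finite_Wt by simp
  have xor: "card (InvC col n) + 2 * card Tset = card Pset + card Qset"
  proof -
    have "card (InvC col n) = card {z \<in> Bk col n \<times> Wt col n. (snd z < fst z) \<noteq> (phi col n (snd z) < phi col n (fst z))}"
      unfolding card_InvC_xor by (rule arg_cong[where f=card]) auto
    then show ?thesis using card_xor[OF fin, of "\<lambda>z. snd z < fst z" "\<lambda>z. phi col n (snd z) < phi col n (fst z)"]
      unfolding Pset_def Qset_def Tset_def by simp
  qed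
  have Pc: "int (card Pset) = PP col (2*n) + of_bool (e \<and> f) * KW col (2*n)"
  proof -
    have "Pset = {(b,w). b \<in> Bk col n \<and> w \<in> Wt col n \<and> w < b}" unfolding Pset_def by auto
    then show ?thesis using card_wb[OF n, of col] e_def f_def by simp
  qed
  define kk where "kk = int (card Qset)"
  have Qc: "2 * kk = (if f then int (card (Bk col n)) * (int (card (Bk col n)) + 1) else int (card (Bk col n)) * (int (card (Bk col n)) - 1))"
  proof -
    have "Qset = {(b,w). b \<in> Bk col n \<and> w \<in> Wt col n \<and> phi col n w < phi col n b}" unfolding Qset_def by auto
    then have "2 * card Qset = (if col 1 then card (Bk col n) * (card (Bk col n) + 1) else card (Bk col n) * (card (Bk col n) - 1))"
      using card_phi_less[OF n cb] by simp
    then have "int (2 * card Qset) = int (if col 1 then card (Bk col n) * (card (Bk col n) + 1) else card (Bk col n) * (card (Bk col n) - 1))"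
      by simp
    then show ?thesis unfolding kk_def f_def by (cases "col 1"; cases "card (Bk col n)") (simp_all add: algebra_simps)
  qed
  have kB: "int (card (Bk col n)) = KB col (2*n) + of_bool (e \<and> f)"
    using card_Bk[OF n, of col] e_def f_def by simp
  have C: "KW col (2*n) - KB col (2*n) = of_bool f + of_bool e - 1" using KW_KB[OF n cb] e_def f_def by simp
  have I: "(DD col (2*n) + 2 * PP col (2*n) + 2 * SS col (2*n)
        - Qf (2 * int n) (int n) (int n) (KB col (2*n)) (KW col (2*n)) (of_bool f) (of_bool e)) mod 4 = 0"
    using conjunct2[OF prefix_inv[of "2*n" col]] n NB_card[of col n] cb e_def f_def by simp
  have Xe: "X + 2 * int (card Tset) = PP col (2*n) + of_bool (e \<and> f) * KW col (2*n) + kk"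
    using xor Pc unfolding X_def kk_def by linarith
  have K: "2 * kk = (if f then (KB col (2*n) + of_bool (e\<and>f)) * (KB col (2*n) + of_bool (e\<and>f) + 1)
      else (KB col (2*n) + of_bool (e\<and>f)) * (KB col (2*n) + of_bool (e\<and>f) - 1))"
    using Qc kB by simp
  have ev: "even (int n * (2 * int n + 1) + Hs - (if f then 0 else int n) - X - (SS col (2*n) + of_bool (e = f) * int n))"
    by (rule final_arith[OF C I Xe K H])
  have sgc: "signc col n = sg X"
    unfolding signc_eq X_def sign_invs[OF cperm_permutes[OF n cb]] card_invs_InvC[OF n cb] sg_pow ..
  have sgs: "(-1::int) ^ (\<Sum>m\<in>couples col n. m div 2) = sg (SS col (2*n) + of_bool (e = f) * int n)"
    unfolding sg_pow using sum_div2[OF n, of col] e_def f_def by (simp add: eq_commute)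
  have sgf: "(if col 1 then 1 else (-1::int) ^ n) = sg (if f then 0 else int n)"
    unfolding f_def by (simp add: sg_pow sg_def)
  have "(if col 1 then 1 else (-1) ^ n) * signc col n * (-1) ^ (\<Sum>m\<in>couples col n. m div 2)
      = sg ((if f then 0 else int n) + X + (SS col (2*n) + of_bool (e = f) * int n))"
    unfolding sgc sgs sgf sg_add by simp
  also have "\<dots> = sg (int n * (2 * int n + 1) + Hs)"
    by (rule sg_eq) (use ev in \<open>simp add: algebra_simps\<close>)
  finally show ?thesis using L by simp
qed

theorem mainTheorem15:
  fixes col :: "nat \<Rightarrow> bool" and n :: nat
  assumes "0 < n" and "card (blacks col n) = n"
  shows
   "(\<forall>a\<in>{1..<n}. (\<not> (\<exists>m. bnode col n a < m \<and> m + 1 < bnode col n (a + 1) \<and> \<not> col m \<and> \<not> col (m + 1)))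
        \<longrightarrow> (\<forall>w\<in>whites col n. eps col (bnode col n (a + 1)) w = - eps col (bnode col n a) w))
  \<and> (\<forall>c\<in>{1..<n}. (\<not> (\<exists>m. wnode col n c < m \<and> m + 1 < wnode col n (c + 1) \<and> col m \<and> col (m + 1)))
        \<longrightarrow> (\<forall>b\<in>blacks col n. eps col b (wnode col n (c + 1)) = - eps col b (wnode col n c)))
  \<and> (\<exists>r c :: nat \<Rightarrow> int. (\<forall>a\<in>{1..n}. r a \<in> {1, -1}) \<and> (\<forall>d\<in>{1..n}. c d \<in> {1, -1}) \<and>
        (\<forall>a\<in>{1..n}. \<forall>d\<in>{1..n}. r a * c d * eps col (bnode col n a) (wnode col n d) = (-1) ^ (a + d)))
  \<and> (\<forall>r c :: nat \<Rightarrow> int. (\<forall>a\<in>{1..n}. r a \<in> {1, -1}) \<and> (\<forall>d\<in>{1..n}. c d \<in> {1, -1}) \<and>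
        (\<forall>a\<in>{1..n}. \<forall>d\<in>{1..n}. r a * c d * eps col (bnode col n a) (wnode col n d) = (-1) ^ (a + d))
      \<longrightarrow> (-1::int) ^ (card {a\<in>{1..n}. r a = -1} + card {d\<in>{1..n}. c d = -1})
          = (if col 1 then 1 else (-1) ^ n) * signc col n * (-1) ^ (\<Sum>m\<in>couples col n. m div 2))"
  proof (intro conjI)
  show "\<forall>a\<in>{1..<n}. (\<not> (\<exists>m. bnode col n a < m \<and> m + 1 < bnode col n (a + 1) \<and> \<not> col m \<and> \<not> col (m + 1)))
        \<longrightarrow> (\<forall>w\<in>whites col n. eps col (bnode col n (a + 1)) w = - eps col (bnode col n a) w)"
    using partA1[OF assms(2)] by blast
  show "\<forall>c\<in>{1..<n}. (\<not> (\<exists>m. wnode col n c < m \<and> m + 1 < wnode col n (c + 1) \<and> col m \<and> col (m + 1)))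
        \<longrightarrow> (\<forall>b\<in>blacks col n. eps col b (wnode col n (c + 1)) = - eps col b (wnode col n c))"
    using partA2[OF assms(2)] by blast
  show "\<exists>r c :: nat \<Rightarrow> int. (\<forall>a\<in>{1..n}. r a \<in> {1, -1}) \<and> (\<forall>d\<in>{1..n}. c d \<in> {1, -1}) \<and>
        (\<forall>a\<in>{1..n}. \<forall>d\<in>{1..n}. r a * c d * eps col (bnode col n a) (wnode col n d) = (-1) ^ (a + d))"
    by (rule partB_exists[OF assms(2) assms(1)])
  show "\<forall>r c :: nat \<Rightarrow> int. (\<forall>a\<in>{1..n}. r a \<in> {1, -1}) \<and> (\<forall>d\<in>{1..n}. c d \<in> {1, -1}) \<and>
        (\<forall>a\<in>{1..n}. \<forall>d\<in>{1..n}. r a * c d * eps col (bnode col n a) (wnode col n d) = (-1) ^ (a + d))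
      \<longrightarrow> (-1::int) ^ (card {a\<in>{1..n}. r a = -1} + card {d\<in>{1..n}. c d = -1})
          = (if col 1 then 1 else (-1) ^ n) * signc col n * (-1) ^ (\<Sum>m\<in>couples col n. m div 2)"
    using partB_parity[OF assms(1) assms(2)] by blast
qed

end
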